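(* Let $k$ be a field and $H\subsetneq\mathbb{N}$ a numerical semigroup with Frobenius number $f$, and let $R=k[[H]]\subseteq k[[t]]$. Then $R$ has minimal canonical conductor if and only if $f-1$ is a quasi-Frobenius number of $H$.
   Context: A numerical semigroup is an additive submonoid $H\subseteq\mathbb{N}$ with $\mathbb{N}\setminus H$ finite; its Frobenius number $f$ is the largest integer not in $H$. An integer $x\notin H$ is a quasi-Frobenius number of $H$ if $x+h\in H$ for all $h\in H$ with $h\neq 0$. $k[[H]]$ is the subring of the power series ring $k[[t]]$ consisting of power series $\sum c_h t^h$ supported on $H$; it is a one-dimensional analytically unramified local domain with integral closure $\overline{R}=k[[t]]$. A one-dimensional singular analytically unramified local domain $R$ with canonical ideal $\omega$ has minimal canonical conductor if $b(\omega)=\mathfrak{c}(R)$, where: $B(\omega)=\bigcup_{n\ge0}(\omega^n:\omega^n)$ with $\omega^n:\omega^n=\{x\in Q(R): x\omega^n\subseteq\omega^n\}$; $b(\omega)=\{x\in B(\omega): xB(\omega)\subseteq R\}$; and $\mathfrak{c}(R)=\{x\in\overline{R}: x\overline{R}\subseteq R\}$. Equivalently, $B(\omega)=\overline{R}$. *)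

theory Defs
  imports "HOL-Computational_Algebra.Formal_Laurent_Series"
begin

definition numerical_semigroup :: "nat set \<Rightarrow> bool" where
  "numerical_semigroup H \<longleftrightarrow>
     0 \<in> H \<and> (\<forall>a\<in>H. \<forall>b\<in>H. a + b \<in> H) \<and> finite (UNIV - H)"

definition frobenius_number :: "nat set \<Rightarrow> nat" where
  "frobenius_number H = Max (UNIV - H)"

definition quasi_frobenius :: "nat set \<Rightarrow> nat \<Rightarrow> bool" where
  "quasi_frobenius H x \<longleftrightarrow> x \<notin> H \<and> (\<forall>h\<in>H. h \<noteq> 0 \<longrightarrow> x + h \<in> H)"

definition semigroup_ring :: "nat set \<Rightarrow> 'a::field fls set" where
  "semigroup_ring H = {F. \<forall>n. fls_nth F n \<noteq> 0 \<longrightarrow> n \<in> int ` H}"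

text \<open>The power series ring k[[t]] inside k((t)) (the integral closure of k[[H]]).\<close>
definition power_series_ring :: "'a::field fls set" where
  "power_series_ring = {F. \<forall>n<0. fls_nth F n = 0}"

definition quot_field :: "'a::field fls set \<Rightarrow> 'a fls set" where
  "quot_field R = {x / y | x y. x \<in> R \<and> y \<in> R \<and> y \<noteq> 0}"

definition mod_prod :: "'a::field fls set \<Rightarrow> 'a fls set \<Rightarrow> 'a fls set" where
  "mod_prod A B = {(\<Sum>i<n. a i * b i) | (n::nat) (a::nat \<Rightarrow> _) (b::nat \<Rightarrow> _). \<forall>i<n. a i \<in> A \<and> b i \<in> B}"

primrec mod_pow :: "'a::field fls set \<Rightarrow> 'a fls set \<Rightarrow> nat \<Rightarrow> 'a fls set" where
  "mod_pow R M 0 = R"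
| "mod_pow R M (Suc n) = mod_prod (mod_pow R M n) M"

definition colon :: "'a::field fls set \<Rightarrow> 'a fls set \<Rightarrow> 'a fls set \<Rightarrow> 'a fls set" where
  "colon R A B = {x \<in> quot_field R. \<forall>y\<in>B. x * y \<in> A}"

definition fractional_ideal :: "'a::field fls set \<Rightarrow> 'a fls set \<Rightarrow> bool" where
  "fractional_ideal R M \<longleftrightarrow>
     M \<subseteq> quot_field R \<and> 0 \<in> M \<and> (\<forall>x\<in>M. \<forall>y\<in>M. x + y \<in> M) \<and>
     (\<forall>r\<in>R. \<forall>x\<in>M. r * x \<in> M) \<and> (\<exists>x\<in>M. x \<noteq> 0) \<and>
     (\<exists>d\<in>R. d \<noteq> 0 \<and> (\<forall>x\<in>M. d * x \<in> R))"

definition canonical_ideal :: "'a::field fls set \<Rightarrow> 'a fls set \<Rightarrow> bool" where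
  "canonical_ideal R \<omega> \<longleftrightarrow> fractional_ideal R \<omega> \<and>
     (\<forall>I. fractional_ideal R I \<longrightarrow> colon R \<omega> (colon R \<omega> I) = I)"

definition blowup :: "'a::field fls set \<Rightarrow> 'a fls set \<Rightarrow> 'a fls set" where
  "blowup R \<omega> = (\<Union>n. colon R (mod_pow R \<omega> n) (mod_pow R \<omega> n))"

definition blowup_conductor :: "'a::field fls set \<Rightarrow> 'a fls set \<Rightarrow> 'a fls set" where
  "blowup_conductor R \<omega> = {x \<in> blowup R \<omega>. \<forall>y\<in>blowup R \<omega>. x * y \<in> R}"

definition conductor :: "'a::field fls set \<Rightarrow> 'a fls set \<Rightarrow> 'a fls set" where
  "conductor R Rbar = {x \<in> Rbar. \<forall>y\<in>Rbar. x * y \<in> R}"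

text \<open>Minimal canonical conductor: b(\<omega>) = c(R) for the canonical ideal \<omega>
  (independent of the choice of \<omega>; we require it for every canonical ideal).\<close>
definition min_canonical_conductor :: "'a::field fls set \<Rightarrow> 'a fls set \<Rightarrow> bool" where
  "min_canonical_conductor R Rbar \<longleftrightarrow>
     (\<forall>\<omega>. canonical_ideal R \<omega> \<longrightarrow> blowup_conductor R \<omega> = conductor R Rbar)"

end

theory Submission
  imports Defs
begin

unbundle fps_syntax


definition sc :: "'a::field \<Rightarrow> 'a fls \<Rightarrow> 'a fls" where
  "sc c F = fls_const c * F"

lemma vs_sc: "vector_space (sc :: 'a::field \<Rightarrow> 'a fls \<Rightarrow> 'a fls)"
  by unfold_locales (auto simp: sc_def algebra_simps fls_plus_const[symmetric])

lemma vs_self: "vector_space ((*) :: 'a::field \<Rightarrow> 'a \<Rightarrow> 'a)"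
  by unfold_locales (auto simp: algebra_simps)

lemma separate:
  fixes I :: "'a::field fls set" and y :: "'a fls"
  assumes z: "0 \<in> I" and ad: "\<And>x z. x \<in> I \<Longrightarrow> z \<in> I \<Longrightarrow> x + z \<in> I"
    and sm: "\<And>c x. x \<in> I \<Longrightarrow> fls_const c * x \<in> I" and y: "y \<notin> I"
  shows "\<exists>g. (\<forall>x\<in>I. g x = 0) \<and> g y = 1 \<and> (\<forall>x z. g (x + z) = g x + g z)
            \<and> (\<forall>c x. g (fls_const c * x) = c * g x)"
proof -
  interpret vs: vector_space "sc :: 'a \<Rightarrow> 'a fls \<Rightarrow> 'a fls" by (rule vs_sc)
  interpret vs2: vector_space "(*) :: 'a \<Rightarrow> 'a \<Rightarrow> 'a" by (rule vs_self)
  interpret vp: vector_space_pair "sc :: 'a \<Rightarrow> 'a fls \<Rightarrow> 'a fls" "(*) :: 'a \<Rightarrow> 'a \<Rightarrow> 'a"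
    by unfold_locales
  have sub: "vs.subspace I" unfolding vs.subspace_def using z ad sm by (auto simp: sc_def)
  obtain B where B: "B \<subseteq> I" "vs.independent B" "I \<subseteq> vs.span B"
    using vs.maximal_independent_subset[of I] by blast
  have spB: "vs.span B = I" using vs.span_subspace[OF B(1) B(3) sub] .
  have ind: "vs.independent (insert y B)"
    using vs.independent_insertI[of y B] B(2) y spB by auto
  obtain g where g: "Vector_Spaces.linear sc (*) g" "\<forall>x\<in>insert y B. g x = (if x = y then 1 else 0)"
    using vp.linear_independent_extend[OF ind, of "\<lambda>x. if x = y then 1 else 0"] by blast
  have yB: "y \<notin> B" using B(1) y by auto
  have "\<forall>x\<in>I. g x = 0"
  proof
    fix x assume "x \<in> I"
    then have xs: "x \<in> vs.span B" using spB by simp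
    have "\<And>b. b \<in> B \<Longrightarrow> g b = 0" using g(2) yB by auto
    then show "g x = 0"
      using vp.linear_eq_0_on_span[OF g(1), of B x] xs by blast
  qed
  moreover have "g y = 1" using g(2) by simp
  moreover have "\<forall>x z. g (x + z) = g x + g z" using vp.linear_add[OF g(1)] by blast
  moreover have "\<forall>c x. g (fls_const c * x) = c * g x"
    using vp.linear_scale[OF g(1)] by (simp add: sc_def)
  ultimately show ?thesis by blast
qed



definition supp_in :: "int set \<Rightarrow> 'a::zero fls \<Rightarrow> bool" where
  "supp_in A F \<longleftrightarrow> (\<forall>n. F $$ n \<noteq> 0 \<longrightarrow> n \<in> A)"

abbreviation tp :: "int \<Rightarrow> 'a::field fls" where "tp z \<equiv> fls_X_intpow z"

lemma tp_nth: "(tp z :: 'a::field fls) $$ n = (if n = z then 1 else 0)"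
  by simp

lemma tp_mult_nth: "(tp z * F :: 'a::field fls) $$ n = F $$ (n - z)"
  by (simp add: fls_X_intpow_times_conv_shift)

lemma supp_in_mono: "A \<subseteq> B \<Longrightarrow> supp_in A F \<Longrightarrow> supp_in B F"
  unfolding supp_in_def by blast

lemma supp_in_subdeg: "supp_in {fls_subdegree F..} F"
  unfolding supp_in_def using fls_eq0_below_subdegree by (metis atLeast_iff not_le)

lemma supp_in_add: "supp_in A F \<Longrightarrow> supp_in A G \<Longrightarrow> supp_in A (F + G)"
  unfolding supp_in_def by (metis add.right_neutral add_0 fls_plus_nth)

lemma supp_in_0: "supp_in A 0"
  unfolding supp_in_def by auto

lemma supp_in_const_mult: "supp_in A F \<Longrightarrow> supp_in A (fls_const c * (F::'a::field fls))"
  unfolding supp_in_def by auto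

lemma supp_in_sum: "(\<And>i. i \<in> S \<Longrightarrow> supp_in A (F i)) \<Longrightarrow> supp_in A (\<Sum>i\<in>S. F i)"
  by (induction S rule: infinite_finite_induct) (auto intro: supp_in_add supp_in_0)

lemma supp_in_mult:
  fixes F G :: "'a::field fls"
  assumes "supp_in A F" "supp_in B G"
  shows "supp_in {a + b | a b. a \<in> A \<and> b \<in> B} (F * G)"
  unfolding supp_in_def
proof (intro allI impI)
  fix n assume "(F * G) $$ n \<noteq> 0"
  then have "(\<Sum>i=fls_subdegree F..n - fls_subdegree G. F $$ i * G $$ (n - i)) \<noteq> 0"
    by (simp add: fls_times_nth(2))
  then obtain i where "F $$ i * G $$ (n - i) \<noteq> 0" by (meson sum.not_neutral_contains_not_neutral)
  then have "i \<in> A" "n - i \<in> B" using assms unfolding supp_in_def by auto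
  then show "n \<in> {a + b | a b. a \<in> A \<and> b \<in> B}" by force
qed

lemma supp_in_mult_ge:
  fixes F G :: "'a::field fls"
  assumes "supp_in {a..} F" "supp_in {b..} G"
  shows "supp_in {a+b..} (F * G)"
  by (rule supp_in_mono[OF _ supp_in_mult[OF assms]]) auto

lemma supp_in_tp: "supp_in {z} (tp z :: 'a::field fls)"
  unfolding supp_in_def by simp

lemma supp_in_inverse: "supp_in {- fls_subdegree F..} (inverse (F::'a::field fls))"
  using supp_in_subdeg[of "inverse F"] by simp

lemma fls_eq_supp_split:
  fixes F :: "'a::field fls"
  assumes "supp_in {b..} F"
  shows "F = (\<Sum>p\<in>{b..<a}. fls_const (F $$ p) * tp p) + (F - (\<Sum>p\<in>{b..<a}. fls_const (F $$ p) * tp p))"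
    and "supp_in {a..} (F - (\<Sum>p\<in>{b..<a}. fls_const (F $$ p) * tp p))"
proof -
  show "F = (\<Sum>p\<in>{b..<a}. fls_const (F $$ p) * tp p) + (F - (\<Sum>p\<in>{b..<a}. fls_const (F $$ p) * tp p))"
    by simp
  have "(\<Sum>p\<in>{b..<a}. fls_const (F $$ p) * tp p) $$ n = (if b \<le> n \<and> n < a then F $$ n else 0)" for n
  proof -
    have "(\<Sum>p\<in>{b..<a}. fls_const (F $$ p) * tp p) $$ n = (\<Sum>p\<in>{b..<a}. (if p = n then F $$ n else 0))"
    proof -
      have "\<And>p. (fls_const (F $$ p) * tp p) $$ n = (if p = n then F $$ n else 0)"
        by auto
      then show ?thesis by (simp only: fls_nth_sum)
    qed
    also have "\<dots> = (if b \<le> n \<and> n < a then F $$ n else 0)"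
      by (simp add: sum.delta')
    finally show ?thesis .
  qed
  then show "supp_in {a..} (F - (\<Sum>p\<in>{b..<a}. fls_const (F $$ p) * tp p))"
    using assms unfolding supp_in_def by (auto simp: not_le)
qed



locale nsg =
  fixes H :: "nat set"
  assumes ns: "numerical_semigroup H" and nU: "H \<noteq> UNIV"
begin

definition fr :: nat where "fr = frobenius_number H"

lemma H0: "0 \<in> H" and Hadd: "a \<in> H \<Longrightarrow> b \<in> H \<Longrightarrow> a + b \<in> H"
  and Hfin: "finite (UNIV - H)"
  using ns unfolding numerical_semigroup_def by auto

lemma fr_notin: "fr \<notin> H"
proof -
  have "UNIV - H \<noteq> {}" using nU by auto
  then have "Max (UNIV - H) \<in> UNIV - H" using Hfin Max_in by blast
  then show ?thesis unfolding fr_def frobenius_number_def by auto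
qed

lemma gt_fr: "n > fr \<Longrightarrow> n \<in> H"
proof (rule ccontr)
  assume "n > fr" "n \<notin> H"
  then have "n \<le> Max (UNIV - H)" using Hfin by (intro Max_ge) auto
  then show False using \<open>n > fr\<close> unfolding fr_def frobenius_number_def by auto
qed

lemma one_notin: "1 \<notin> H"
proof
  assume "1 \<in> H"
  have "n \<in> H" for n
  proof (induction n)
    case 0 show ?case using H0 by simp
  next
    case (Suc n) then show ?case using Hadd[of n 1] \<open>1 \<in> H\<close> by simp
  qed
  then show False using fr_notin by blast
qed

lemma fr_ge1: "fr \<ge> 1" using fr_notin H0 by (cases fr) auto

abbreviation HH :: "int set" where "HH \<equiv> int ` H"

lemma R_eq: "semigroup_ring H = {F. supp_in HH F}"
  unfolding semigroup_ring_def supp_in_def by auto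

lemma V_eq: "power_series_ring = {F. supp_in {0..} F}"
  unfolding power_series_ring_def supp_in_def atLeast_iff by (metis not_le)

lemma HH_sum: "{a + b |a b. a \<in> HH \<and> b \<in> HH} \<subseteq> HH"
  using Hadd by (auto simp flip: of_nat_add)

lemma R_mult: "x \<in> semigroup_ring H \<Longrightarrow> y \<in> semigroup_ring H \<Longrightarrow> x * y \<in> semigroup_ring H"
  unfolding R_eq using supp_in_mult HH_sum supp_in_mono by blast

lemma R_add: "x \<in> semigroup_ring H \<Longrightarrow> y \<in> semigroup_ring H \<Longrightarrow> x + y \<in> semigroup_ring H"
  unfolding R_eq using supp_in_add by blast

lemma R_0: "0 \<in> semigroup_ring H" unfolding R_eq by (simp add: supp_in_0)

lemma R_const: "fls_const c \<in> semigroup_ring H"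
  unfolding R_eq supp_in_def mem_Collect_eq using H0 by simp

lemma R_1: "1 \<in> semigroup_ring H" using R_const[of 1] by simp

lemma R_tp: "h \<in> H \<Longrightarrow> (tp (int h) :: 'a::field fls) \<in> semigroup_ring H"
  unfolding R_eq supp_in_def by auto

lemma R_tail: "supp_in {int fr + 1..} F \<Longrightarrow> F \<in> semigroup_ring H"
  unfolding R_eq supp_in_def mem_Collect_eq
proof (intro allI impI)
  fix n assume a: "\<forall>n. F $$ n \<noteq> 0 \<longrightarrow> n \<in> {int fr + 1..}" "F $$ n \<noteq> 0"
  then have "n \<ge> int fr + 1" by auto
  then have "nat n > fr" by linarith
  then have "nat n \<in> H" by (rule gt_fr)
  moreover have "n = int (nat n)" using \<open>n \<ge> int fr + 1\<close> by simp
  ultimately show "n \<in> HH" by (intro image_eqI[of n int "nat n"])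
qed

lemma R_sub_V: "semigroup_ring H \<subseteq> power_series_ring"
proof
  fix x :: "'a fls" assume "x \<in> semigroup_ring H"
  then have "supp_in HH x" unfolding R_eq by simp
  moreover have "HH \<subseteq> {0..}" by auto
  ultimately have "supp_in {0..} x" using supp_in_mono by blast
  then show "x \<in> power_series_ring" unfolding V_eq by simp
qed

lemma quot_UNIV: "quot_field (semigroup_ring H) = (UNIV :: 'a::field fls set)"
proof -
  have "F \<in> quot_field (semigroup_ring H)" for F :: "'a fls"
  proof -
    define m where "m = int fr + 1 + \<bar>fls_subdegree F\<bar>"
    have m: "m \<ge> int fr + 1" unfolding m_def by simp
    have "nat m \<in> H" using gt_fr m by auto
    then have t: "tp m \<in> semigroup_ring H" using R_tp[of "nat m"] m by simp
    have "supp_in {fls_subdegree F + m..} (F * tp m)"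
      using supp_in_mult_ge[OF supp_in_subdeg supp_in_mono[OF _ supp_in_tp]] by auto
    then have "F * tp m \<in> semigroup_ring H"
      by (intro R_tail) (rule supp_in_mono[rotated], assumption, auto simp: m_def)
    moreover have "F = (F * tp m) / tp m" by (simp add: field_simps)
    moreover have "tp m \<noteq> (0::'a fls)" by simp
    ultimately have "\<exists>x y. F = x / y \<and> x \<in> semigroup_ring H \<and> y \<in> semigroup_ring H \<and> y \<noteq> 0"
      using t by blast
    then show ?thesis unfolding quot_field_def by blast
  qed
  then show ?thesis by auto
qed

lemma colon_eq: "colon (semigroup_ring H) A B = {x. \<forall>y\<in>B. x * y \<in> A}"
  unfolding colon_def quot_UNIV by auto

definition frac :: "'a::field fls set \<Rightarrow> bool" where
  "frac M \<longleftrightarrow> 0 \<in> M \<and> (\<forall>x\<in>M. \<forall>y\<in>M. x + y \<in> M) \<and>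
     (\<forall>r\<in>semigroup_ring H. \<forall>x\<in>M. r * x \<in> M) \<and> (\<exists>x\<in>M. x \<noteq> 0) \<and>
     (\<exists>b. \<forall>x\<in>M. supp_in {b..} x)"

lemma frac_iff: "fractional_ideal (semigroup_ring H) M \<longleftrightarrow> frac M"
proof
  assume a: "fractional_ideal (semigroup_ring H) M"
  then obtain d where d: "d \<in> semigroup_ring H" "d \<noteq> 0" "\<forall>x\<in>M. d * x \<in> semigroup_ring H"
    unfolding fractional_ideal_def by blast
  have "supp_in {- fls_subdegree d..} x" if "x \<in> M" for x
  proof -
    have "supp_in {0..} (d * x)" using d(3) that R_sub_V V_eq by auto
    then have "supp_in {0 + - fls_subdegree d..} ((d * x) * inverse d)"
      by (rule supp_in_mult_ge[OF _ supp_in_inverse])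
    moreover have "(d * x) * inverse d = x" using d(2) by (simp add: field_simps)
    ultimately show ?thesis by simp
  qed
  then show "frac M" using a unfolding fractional_ideal_def frac_def by blast
next
  assume a: "frac M"
  then obtain b where b: "\<forall>x\<in>M. supp_in {b..} x" unfolding frac_def by blast
  define m where "m = int fr + 1 + \<bar>b\<bar>"
  have m: "m \<ge> int fr + 1" unfolding m_def by simp
  have "nat m \<in> H" using gt_fr m by auto
  then have t: "tp m \<in> semigroup_ring H" using R_tp[of "nat m"] m by simp
  have "tp m * x \<in> semigroup_ring H" if "x \<in> M" for x
  proof -
    have "supp_in {m + b..} (tp m * x)"
      using supp_in_mult_ge[OF supp_in_mono[OF _ supp_in_tp] b[rule_format, OF that]] by auto
    then show ?thesis by (intro R_tail) (rule supp_in_mono[rotated], assumption, auto simp: m_def)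
  qed
  moreover have "tp m \<noteq> 0" by simp
  ultimately show "fractional_ideal (semigroup_ring H) M"
    using a t unfolding fractional_ideal_def frac_def quot_UNIV by blast
qed

lemma frac_contains_tail:
  assumes "frac M"
  shows "\<exists>a. \<forall>F. supp_in {a..} F \<longrightarrow> F \<in> M"
proof -
  obtain y where y: "y \<in> M" "y \<noteq> 0" using assms unfolding frac_def by blast
  define a where "a = fls_subdegree y + int fr + 1"
  have "F \<in> M" if F: "supp_in {a..} F" for F
  proof -
    have "supp_in {a + - fls_subdegree y..} (F * inverse y)"
      by (rule supp_in_mult_ge[OF F supp_in_inverse])
    then have r: "F * inverse y \<in> semigroup_ring H"
      by (intro R_tail) (rule supp_in_mono[rotated], assumption, auto simp: a_def)
    have "(F * inverse y) * y = F" using y(2) by (simp add: field_simps)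
    then show ?thesis using assms r y(1) unfolding frac_def by metis
  qed
  then show ?thesis by blast
qed

end


lemma sum_concat: "(\<Sum>i<n1+n2. f i) = (\<Sum>i<n1. f i) + (\<Sum>i<n2. f (n1 + i))"
  for f :: "nat \<Rightarrow> 'b::comm_monoid_add"
  by (induction n2) (simp_all add: add.assoc)

lemma mod_prod_mem: "a \<in> A \<Longrightarrow> b \<in> B \<Longrightarrow> a * b \<in> mod_prod A B"
  unfolding mod_prod_def
  by (rule CollectI, rule exI[of _ 1], rule exI[of _ "\<lambda>_. a"], rule exI[of _ "\<lambda>_. b"]) simp

lemma mod_prod_intro:
  "x = (\<Sum>i<(n::nat). a i * b i) \<Longrightarrow> \<forall>i<n. a i \<in> A \<and> b i \<in> B \<Longrightarrow> x \<in> mod_prod A B"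
  unfolding mod_prod_def by blast

lemma mod_prod_0: "0 \<in> mod_prod A B"
  unfolding mod_prod_def
  by (rule CollectI, rule exI[of _ 0]) simp

lemma mod_prod_add:
  assumes "x \<in> mod_prod A B" "y \<in> mod_prod A B"
  shows "x + y \<in> mod_prod A B"
proof -
  obtain n1 a1 b1 where 1: "x = (\<Sum>i<(n1::nat). a1 i * b1 i)" "\<forall>i<n1. a1 i \<in> A \<and> b1 i \<in> B"
    using assms(1) unfolding mod_prod_def by blast
  obtain n2 a2 b2 where 2: "y = (\<Sum>i<(n2::nat). a2 i * b2 i)" "\<forall>i<n2. a2 i \<in> A \<and> b2 i \<in> B"
    using assms(2) unfolding mod_prod_def by blast
  define a where "a i = (if i < n1 then a1 i else a2 (i - n1))" for i
  define b where "b i = (if i < n1 then b1 i else b2 (i - n1))" for i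
  have "x + y = (\<Sum>i<n1+n2. a i * b i)"
    unfolding sum_concat 1 2 a_def b_def by simp
  moreover have "\<forall>i<n1+n2. a i \<in> A \<and> b i \<in> B"
    using 1 2 unfolding a_def b_def by auto
  ultimately show ?thesis unfolding mod_prod_def by blast
qed

lemma mod_prod_sub:
  assumes "\<And>a b. a \<in> A \<Longrightarrow> b \<in> B \<Longrightarrow> a * b \<in> S" "0 \<in> S"
    "\<And>x y. x \<in> S \<Longrightarrow> y \<in> S \<Longrightarrow> x + y \<in> S"
  shows "mod_prod A B \<subseteq> S"
proof
  fix x assume "x \<in> mod_prod A B"
  then obtain n a b where x: "x = (\<Sum>i<(n::nat). a i * b i)" "\<forall>i<n. a i \<in> A \<and> b i \<in> B"
    unfolding mod_prod_def by blast
  have "(\<Sum>i<m. a i * b i) \<in> S" if "m \<le> n" for m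
    using that by (induction m) (use assms x(2) in auto)
  then show "x \<in> S" using x(1) by simp
qed

lemma mod_prod_lmult:
  fixes A B :: "'a::field fls set"
  assumes "\<And>a. a \<in> A \<Longrightarrow> r * a \<in> A" "x \<in> mod_prod A B"
  shows "r * x \<in> mod_prod A B"
proof -
  obtain n a b where x: "x = (\<Sum>i<(n::nat). a i * b i)" "\<forall>i<n. a i \<in> A \<and> b i \<in> B"
    using assms(2) unfolding mod_prod_def by blast
  have "r * x = (\<Sum>i<n. (r * a i) * b i)" unfolding x by (simp add: sum_distrib_left mult.assoc)
  moreover have "\<forall>i<n. r * a i \<in> A \<and> b i \<in> B" using x(2) assms(1) by auto
  ultimately show ?thesis by (rule mod_prod_intro)
qed

context nsg begin

abbreviation RR :: "'a::field fls set" where "RR \<equiv> semigroup_ring H"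

lemma frac_colon:
  fixes A B :: "'a::field fls set"
  assumes A: "frac A" and B: "frac B"
  shows "frac (colon RR A B)"
proof -
  have c: "colon RR A B = {x. \<forall>y\<in>B. x * y \<in> A}" by (rule colon_eq)
  obtain a where a: "\<forall>F. supp_in {a..} F \<longrightarrow> F \<in> A" using frac_contains_tail[OF A] by blast
  obtain b where b: "\<forall>x\<in>B. supp_in {b..} x" using B unfolding frac_def by blast
  obtain \<alpha> where al: "\<forall>x\<in>A. supp_in {\<alpha>..} x" using A unfolding frac_def by blast
  obtain y0 where y0: "y0 \<in> B" "y0 \<noteq> 0" using B unfolding frac_def by blast
  have t: "tp (a - b) \<in> colon RR A B"
  proof -
    have "tp (a - b) * y \<in> A" if "y \<in> B" for y
    proof -
      have "supp_in {(a - b) + b..} (tp (a - b) * y)"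
        by (rule supp_in_mult_ge[OF supp_in_mono[OF _ supp_in_tp] b[rule_format, OF that]]) auto
      then show ?thesis using a by simp
    qed
    then show ?thesis unfolding c by blast
  qed
  have bd: "supp_in {\<alpha> + - fls_subdegree y0..} x" if "x \<in> colon RR A B" for x
  proof -
    have "x * y0 \<in> A" using that y0 unfolding c by blast
    then have "supp_in {\<alpha> + - fls_subdegree y0..} ((x * y0) * inverse y0)"
      using supp_in_mult_ge[OF _ supp_in_inverse] al by blast
    moreover have "(x * y0) * inverse y0 = x" using y0(2) by (simp add: field_simps)
    ultimately show ?thesis by simp
  qed
  have "0 \<in> colon RR A B" using A unfolding c frac_def by simp
  moreover have "\<forall>x\<in>colon RR A B. \<forall>y\<in>colon RR A B. x + y \<in> colon RR A B"
    using A unfolding c frac_def by (simp add: distrib_right)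
  moreover have "\<forall>r\<in>RR. \<forall>x\<in>colon RR A B. r * x \<in> colon RR A B"
    using A unfolding c frac_def by (simp add: mult.assoc)
  moreover have "\<exists>x\<in>colon RR A B. x \<noteq> 0" using t fls_X_intpow_nonzero by blast
  ultimately show ?thesis unfolding frac_def using bd by blast
qed

lemma frac_prod:
  fixes A B :: "'a::field fls set"
  assumes A: "frac A" and B: "frac B"
  shows "frac (mod_prod A B)"
proof -
  obtain \<alpha> where al: "\<forall>x\<in>A. supp_in {\<alpha>..} x" using A unfolding frac_def by blast
  obtain \<beta> where be: "\<forall>x\<in>B. supp_in {\<beta>..} x" using B unfolding frac_def by blast
  obtain x0 where x0: "x0 \<in> A" "x0 \<noteq> 0" using A unfolding frac_def by blast
  obtain y0 where y0: "y0 \<in> B" "y0 \<noteq> 0" using B unfolding frac_def by blast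
  have "mod_prod A B \<subseteq> {x. supp_in {\<alpha> + \<beta>..} x}"
  proof (rule mod_prod_sub)
    fix a b assume "a \<in> A" "b \<in> B"
    then show "a * b \<in> {x. supp_in {\<alpha> + \<beta>..} x}" using al be supp_in_mult_ge by blast
  qed (auto intro: supp_in_0 supp_in_add)
  moreover have "x0 * y0 \<in> mod_prod A B" "x0 * y0 \<noteq> 0" using x0 y0 mod_prod_mem by auto
  moreover have "\<forall>r\<in>RR. \<forall>x\<in>mod_prod A B. r * x \<in> mod_prod A B"
  proof (intro ballI)
    fix r x :: "'a fls" assume "r \<in> RR" "x \<in> mod_prod A B"
    then show "r * x \<in> mod_prod A B" using A unfolding frac_def by (blast intro: mod_prod_lmult)
  qed
  ultimately show ?thesis unfolding frac_def using mod_prod_0 mod_prod_add by blast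
qed

lemma colon_assoc:
  fixes A B C :: "'a::field fls set"
  assumes "0 \<in> A" "\<And>x y. x \<in> A \<Longrightarrow> y \<in> A \<Longrightarrow> x + y \<in> A"
  shows "colon RR A (mod_prod B C) = colon RR (colon RR A B) C"
proof -
  have "(\<forall>s\<in>mod_prod B C. x * s \<in> A) \<longleftrightarrow> (\<forall>c\<in>C. \<forall>b\<in>B. x * c * b \<in> A)" for x
  proof
    assume "\<forall>s\<in>mod_prod B C. x * s \<in> A"
    then show "\<forall>c\<in>C. \<forall>b\<in>B. x * c * b \<in> A"
    proof (intro ballI)
      fix c b assume h: "\<forall>s\<in>mod_prod B C. x * s \<in> A" "c \<in> C" "b \<in> B"
      then have "x * (b * c) \<in> A" using mod_prod_mem by blast
      then show "x * c * b \<in> A" by (simp add: ac_simps)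
    qed
  next
    assume h: "\<forall>c\<in>C. \<forall>b\<in>B. x * c * b \<in> A"
    have "mod_prod B C \<subseteq> {s. x * s \<in> A}"
    proof (rule mod_prod_sub)
      fix b c assume "b \<in> B" "c \<in> C"
      then have "x * c * b \<in> A" using h by blast
      then show "b * c \<in> {s. x * s \<in> A}" by (simp add: ac_simps)
    qed (use assms in \<open>auto simp: distrib_left\<close>)
    then show "\<forall>s\<in>mod_prod B C. x * s \<in> A" by blast
  qed
  then show ?thesis unfolding colon_eq by auto
qed

end


lemma g_sum:
  assumes "\<forall>x z. g (x + z) = (g x + g z :: 'b::ab_group_add)" "finite S"
  shows "g (\<Sum>p\<in>S. F p) = (\<Sum>p\<in>S. g (F p))"
proof -
  have g0: "g 0 = 0"
  proof -
    have "g (0 + 0) = g 0 + g 0" using assms(1) by blast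
    then show ?thesis by simp
  qed
  show ?thesis using assms(2) by (induction S rule: finite_induct) (simp_all add: g0 assms(1))
qed

context nsg begin

definition KH :: "int set" where "KH = {z. int fr - z \<notin> HH}"

definition Kc :: "'a::field fls set" where "Kc = {F. supp_in KH F}"

lemma KH_nonneg: "z \<in> KH \<Longrightarrow> z \<ge> 0"
proof (rule ccontr)
  assume "z \<in> KH" "\<not> z \<ge> 0"
  then have "fr + nat (- z) > fr" by simp
  then have "fr + nat (- z) \<in> H" by (rule gt_fr)
  moreover have "int fr - z = int (fr + nat (- z))" using \<open>\<not> z \<ge> 0\<close> by simp
  ultimately have "int fr - z \<in> HH" by (metis imageI)
  then show False using \<open>z \<in> KH\<close> unfolding KH_def by simp
qed

lemma zero_KH: "0 \<in> KH"
  unfolding KH_def using fr_notin by auto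

lemma fr_notin_KH: "int fr \<notin> KH"
  unfolding KH_def using H0 by auto

lemma KH_add: "h \<in> H \<Longrightarrow> z \<in> KH \<Longrightarrow> int h + z \<in> KH"
proof -
  assume h: "h \<in> H" and z: "z \<in> KH"
  show "int h + z \<in> KH"
  proof (rule ccontr)
    assume "int h + z \<notin> KH"
    then obtain h' where h': "h' \<in> H" "int fr - (int h + z) = int h'" unfolding KH_def by auto
    then have "int fr - z = int (h' + h)" by simp
    moreover have "h' + h \<in> H" using h h' Hadd by blast
    ultimately have "int fr - z \<in> HH" by (metis imageI)
    then show False using z unfolding KH_def by auto
  qed
qed

lemma ge_KH: "z \<ge> int fr + 1 \<Longrightarrow> z \<in> KH"
  unfolding KH_def by auto

lemma Kc_mem:
  assumes "\<forall>h\<in>H. F $$ (int fr - int h) = 0"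
  shows "F \<in> Kc"
  unfolding Kc_def supp_in_def mem_Collect_eq
proof (intro allI impI)
  fix n assume n: "F $$ n \<noteq> 0"
  show "n \<in> KH"
  proof (rule ccontr)
    assume "n \<notin> KH"
    then obtain h where "h \<in> H" "int fr - n = int h" unfolding KH_def by auto
    then have "n = int fr - int h" by simp
    then show False using assms n \<open>h \<in> H\<close> by auto
  qed
qed

lemma Kc_fr: "F \<in> Kc \<Longrightarrow> F $$ int fr = 0"
  unfolding Kc_def supp_in_def using fr_notin_KH by auto

lemma frac_K: "frac (Kc :: 'a::field fls set)"
proof -
  have "supp_in KH (r * x)" if "r \<in> RR" "x \<in> Kc" for r x :: "'a fls"
  proof -
    have "supp_in {a + b |a b. a \<in> HH \<and> b \<in> KH} (r * x)"
      using supp_in_mult that unfolding R_eq Kc_def by blast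
    moreover have "{a + b |a b. a \<in> HH \<and> b \<in> KH} \<subseteq> KH" using KH_add by auto
    ultimately show ?thesis using supp_in_mono by blast
  qed
  moreover have "(1::'a fls) \<in> Kc" unfolding Kc_def supp_in_def using zero_KH by simp
  moreover have "\<forall>x\<in>(Kc :: 'a fls set). supp_in {0..} x"
    unfolding Kc_def using KH_nonneg supp_in_mono[of KH "{0..}"] by auto
  moreover have "(0::'a fls) \<in> Kc" unfolding Kc_def by (simp add: supp_in_0)
  moreover have "\<forall>x\<in>(Kc :: 'a fls set). \<forall>y\<in>Kc. x + y \<in> Kc" unfolding Kc_def by (simp add: supp_in_add)
  moreover have "(1::'a fls) \<noteq> 0" by simp
  ultimately show ?thesis unfolding frac_def unfolding Kc_def mem_Collect_eq by blast
qed

end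


context nsg begin

lemma K_dual:
  fixes I :: "'a::field fls set"
  assumes fI: "frac I"
  shows "colon RR Kc (colon RR Kc I) = I"
proof
  show "I \<subseteq> colon RR Kc (colon RR Kc I)"
    unfolding colon_eq by (auto simp: mult.commute)
next
  show "colon RR Kc (colon RR Kc I) \<subseteq> I"
  proof
    fix y assume y: "y \<in> colon RR Kc (colon RR Kc I)"
    show "y \<in> I"
    proof (rule ccontr)
      assume ny: "y \<notin> I"
      have I0: "0 \<in> I" and Iadd: "\<And>x z. x \<in> I \<Longrightarrow> z \<in> I \<Longrightarrow> x + z \<in> I"
        and Imul: "\<And>r x. r \<in> RR \<Longrightarrow> x \<in> I \<Longrightarrow> r * x \<in> I"
        using fI unfolding frac_def by auto
      have Ic: "\<And>c x. x \<in> I \<Longrightarrow> fls_const c * x \<in> I" using Imul R_const by blast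
      obtain g where g: "\<forall>x\<in>I. g x = 0" "g y = 1" "\<forall>x z. g (x + z) = g x + g z"
        "\<forall>c x. g (fls_const c * x) = c * g x"
        using separate[of I y, OF I0 Iadd Ic ny] by blast
      obtain a where a: "\<forall>F. supp_in {a..} F \<longrightarrow> F \<in> I" using frac_contains_tail[OF fI] by blast
      obtain b where b: "\<forall>x\<in>I. supp_in {b..} x" using fI unfolding frac_def by blast
      define b' where "b' = min b (fls_subdegree y)"
      define x where "x = (\<Sum>p\<in>{b'..<a}. fls_const (g (tp p)) * tp (int fr - p))"
      have key: "(x * s) $$ int fr = g s" if s: "supp_in {b'..} s" for s
      proof -
        have t: "(fls_const (g (tp p)) * tp (int fr - p) * s) $$ int fr = g (tp p) * s $$ p" for p
        proof -
          have "fls_const (g (tp p)) * tp (int fr - p) * s = fls_const (g (tp p)) * (tp (int fr - p) * s)"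
            by (simp add: mult.assoc)
          then show ?thesis by (simp only: fls_mult_const_nth tp_mult_nth) simp
        qed
        have 1: "(x * s) $$ int fr = (\<Sum>p\<in>{b'..<a}. g (tp p) * s $$ p)"
          unfolding x_def sum_distrib_right fls_nth_sum t ..
        define S where "S = (\<Sum>p\<in>{b'..<a}. fls_const (s $$ p) * tp p)"
        have sp: "s = S + (s - S)" "supp_in {a..} (s - S)"
          using fls_eq_supp_split[OF s, of a] unfolding S_def by auto
        have "s - S \<in> I" using a sp(2) by blast
        then have "g s = g S" using g(1,3) sp(1) by (metis add.right_neutral)
        also have "\<dots> = (\<Sum>p\<in>{b'..<a}. g (fls_const (s $$ p) * tp p))"
          unfolding S_def by (rule g_sum) (use g(3) in auto)
        also have "\<dots> = (\<Sum>p\<in>{b'..<a}. g (tp p) * s $$ p)"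
          by (intro sum.cong refl) (simp only: g(4)[rule_format] mult.commute)
        finally show ?thesis using 1 by simp
      qed
      have xc: "x \<in> colon RR Kc I"
        unfolding colon_eq mem_Collect_eq
      proof
        fix i assume i: "i \<in> I"
        show "x * i \<in> Kc"
        proof (rule Kc_mem, intro ballI)
          fix h assume h: "h \<in> H"
          have "(x * i) $$ (int fr - int h) = (tp (int h) * (x * i)) $$ int fr"
            by (simp only: tp_mult_nth)
          also have "\<dots> = (x * (tp (int h) * i)) $$ int fr" by (simp only: ac_simps)
          also have "\<dots> = g (tp (int h) * i)"
          proof (rule key)
            have "supp_in {int h + b..} (tp (int h) * i)"
              using supp_in_mult_ge[OF supp_in_mono[OF _ supp_in_tp] b[rule_format, OF i]] by auto
            then show "supp_in {b'..} (tp (int h) * i)"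
              by (rule supp_in_mono[rotated]) (auto simp: b'_def)
          qed
          also have "\<dots> = 0" using g(1) Imul[OF R_tp[OF h] i] by blast
          finally show "(x * i) $$ (int fr - int h) = 0" .
        qed
      qed
      then have "y * x \<in> Kc" using y unfolding colon_eq by blast
      then have "(x * y) $$ int fr = 0" using Kc_fr by (simp add: mult.commute)
      moreover have "(x * y) $$ int fr = g y"
        by (rule key, rule supp_in_mono[OF _ supp_in_subdeg]) (auto simp: b'_def)
      ultimately show False using g(2) by simp
    qed
  qed
qed

lemma K_canonical: "canonical_ideal RR (Kc :: 'a::field fls set)"
  unfolding canonical_ideal_def frac_iff using frac_K K_dual by blast

end


lemma mod_prod_scale_sub:
  fixes A B A' B' :: "'a::field fls set"
  assumes "(*) c ` A \<subseteq> A'" "(*) d ` B \<subseteq> B'"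
  shows "(*) (c * d) ` mod_prod A B \<subseteq> mod_prod A' B'"
proof
  fix z assume "z \<in> (*) (c * d) ` mod_prod A B"
  then obtain s where s: "s \<in> mod_prod A B" "z = c * d * s" by blast
  obtain n a b where x: "s = (\<Sum>i<(n::nat). a i * b i)" "\<forall>i<n. a i \<in> A \<and> b i \<in> B"
    using s(1) unfolding mod_prod_def by blast
  have "z = (\<Sum>i<n. (c * a i) * (d * b i))"
    unfolding s(2) x(1) by (simp add: sum_distrib_left ac_simps)
  moreover have "\<forall>i<n. c * a i \<in> A' \<and> d * b i \<in> B'" using x(2) assms by blast
  ultimately show "z \<in> mod_prod A' B'" by (rule mod_prod_intro)
qed

lemma colon_transfer_sub:
  fixes A B :: "'a::field fls set"
  assumes "c \<noteq> 0" "(*) c ` A \<subseteq> B" "(*) (inverse c) ` B \<subseteq> A"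
  shows "{z. \<forall>w\<in>A. z * w \<in> A} \<subseteq> {z. \<forall>w\<in>B. z * w \<in> B}"
proof (intro subsetI CollectI ballI)
  fix z k assume z: "z \<in> {z. \<forall>w\<in>A. z * w \<in> A}" and k: "k \<in> B"
  have "inverse c * k \<in> A" using assms(3) k by blast
  then have "z * (inverse c * k) \<in> A" using z by blast
  then have "c * (z * (inverse c * k)) \<in> B" using assms(2) by blast
  moreover have "c * (z * (inverse c * k)) = z * k" using assms(1) by (simp add: field_simps)
  ultimately show "z * k \<in> B" by simp
qed

lemma frac_sum:
  assumes "0 \<in> M" "\<And>x y. x \<in> M \<Longrightarrow> y \<in> M \<Longrightarrow> x + y \<in> M" "\<And>i. i \<in> S \<Longrightarrow> F i \<in> M"
  shows "(\<Sum>i\<in>S. F i) \<in> M"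
  using assms(3) by (induction S rule: infinite_finite_induct) (auto intro: assms(1,2))

context nsg begin

abbreviation VV :: "'a::field fls set" where "VV \<equiv> power_series_ring"

lemma frac_R: "frac (RR :: 'a::field fls set)"
  unfolding frac_def using R_0 R_add R_mult R_1 R_sub_V
  by (intro conjI ballI exI[of _ 0] bexI[of _ 1]) (auto simp: V_eq)

lemma frac_pow: "frac (mod_pow RR M n)" if "frac (M :: 'a::field fls set)"
  by (induction n) (simp_all add: frac_R frac_prod that)

lemma inv_in_R:
  fixes u :: "'a::field fls"
  assumes u: "u \<in> RR" "u $$ 0 \<noteq> 0"
  shows "inverse u \<in> RR"
proof -
  have uV: "supp_in {0..} u" using u(1) R_sub_V V_eq by auto
  have u0: "u \<noteq> 0" using u(2) by auto
  have du: "fls_subdegree u = 0"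
    by (rule fls_subdegree_eqI[OF u(2)]) (use uV in \<open>auto simp: supp_in_def\<close>)
  define w where "w = inverse u"
  have dw: "fls_subdegree w = 0" unfolding w_def using du by simp
  have uw: "u * w = 1" unfolding w_def using u0 by simp
  have uH: "u $$ i \<noteq> 0 \<Longrightarrow> i \<in> HH" for i using u(1) unfolding R_eq supp_in_def by auto
  have main: "n \<notin> H \<Longrightarrow> w $$ int n = 0" for n
  proof (induction n rule: less_induct)
    case (less n)
    have n1: "n \<ge> 1" using less.prems H0 by (cases n) auto
    have "(u * w) $$ int n = (\<Sum>i=0..int n. u $$ i * w $$ (int n - i))"
      using fls_times_nth(2)[of u w "int n"] du dw by simp
    also have "\<dots> = u $$ 0 * w $$ (int n) + (\<Sum>i=1..int n. u $$ i * w $$ (int n - i))"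
    proof -
      have "{0..int n} = insert 0 {1..int n}" by auto
      then show ?thesis by simp
    qed
    also have "(\<Sum>i=1..int n. u $$ i * w $$ (int n - i)) = 0"
    proof (rule sum.neutral, intro ballI)
      fix i assume i: "i \<in> {1..int n}"
      show "u $$ i * w $$ (int n - i) = 0"
      proof (cases "u $$ i = 0")
        case False
        then obtain h where h: "h \<in> H" "i = int h" using uH by blast
        have hn: "h \<le> n" "h \<ge> 1" using i h by auto
        have "n - h \<notin> H"
        proof
          assume "n - h \<in> H"
          then have "(n - h) + h \<in> H" using h(1) Hadd by blast
          then show False using less.prems hn by simp
        qed
        then have "w $$ int (n - h) = 0" using less.IH[of "n - h"] hn by simp
        moreover have "int n - i = int (n - h)" using h hn by simp
        ultimately show ?thesis by simp
      qed simp
    qed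
    finally have "(u * w) $$ int n = u $$ 0 * w $$ int n" by simp
    moreover have "(u * w) $$ int n = 0" using uw n1 by simp
    ultimately show ?case using u(2) by simp
  qed
  have "supp_in HH w" unfolding supp_in_def
  proof (intro allI impI)
    fix m assume m: "w $$ m \<noteq> 0"
    then have "m \<ge> 0" using dw fls_eq0_below_subdegree by (metis not_le)
    then have "m = int (nat m)" by simp
    then have "nat m \<in> H" using main m by metis
    then show "m \<in> HH" using \<open>m = int (nat m)\<close> by (metis imageI)
  qed
  then show ?thesis unfolding R_eq w_def by simp
qed

lemma colon_K_R: "colon RR Kc RR = (Kc :: 'a::field fls set)"
proof -
  have "x * r \<in> Kc" if "x \<in> Kc" "r \<in> RR" for x r :: "'a fls"
    using frac_K that unfolding frac_def by (metis mult.commute)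
  moreover have "x * 1 \<in> Kc \<Longrightarrow> x \<in> Kc" for x :: "'a fls" by simp
  ultimately show ?thesis unfolding colon_eq using R_1 by blast
qed

lemma colon_K_K: "colon RR Kc Kc = (RR :: 'a::field fls set)"
proof -
  have "colon RR Kc (colon RR Kc RR) = (RR :: 'a fls set)" by (rule K_dual[OF frac_R])
  then show ?thesis unfolding colon_K_R .
qed

lemma canonical_unique:
  fixes \<omega> :: "'a::field fls set"
  assumes c: "canonical_ideal RR \<omega>"
  shows "\<exists>x. x \<noteq> 0 \<and> (*) x ` \<omega> = Kc"
proof -
  have f\<omega>: "frac \<omega>" using c unfolding canonical_ideal_def frac_iff by blast
  have d\<omega>: "\<And>I. frac I \<Longrightarrow> colon RR \<omega> (colon RR \<omega> I) = I"
    using c unfolding canonical_ideal_def frac_iff by blast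
  define M where "M = colon RR Kc \<omega>"
  define N where "N = colon RR \<omega> Kc"
  have fM: "frac M" unfolding M_def by (rule frac_colon[OF frac_K f\<omega>])
  have fN: "frac N" unfolding N_def by (rule frac_colon[OF f\<omega> frac_K])
  have fMN: "frac (mod_prod M N)" by (rule frac_prod[OF fM fN])
  have ii: "colon RR Kc M = \<omega>" unfolding M_def by (rule K_dual[OF f\<omega>])
  have iv: "colon RR \<omega> N = Kc" unfolding N_def by (rule d\<omega>[OF frac_K])
  have K0: "(0::'a fls) \<in> Kc" and Kadd: "\<And>x y. x \<in> Kc \<Longrightarrow> y \<in> Kc \<Longrightarrow> x + y \<in> (Kc :: 'a fls set)"
    using frac_K unfolding frac_def by auto
  have "colon RR Kc (mod_prod M N) = colon RR (colon RR Kc M) N"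
    by (rule colon_assoc[OF K0 Kadd])
  then have v: "colon RR Kc (mod_prod M N) = Kc" using ii iv by simp
  have "mod_prod M N = colon RR Kc (colon RR Kc (mod_prod M N))" using K_dual[OF fMN] by simp
  also have "\<dots> = RR" using v colon_K_K by simp
  finally have MN: "mod_prod M N = RR" .
  have "(1::'a fls) \<in> mod_prod M N" using MN R_1 by simp
  then obtain n m nn where mn: "1 = (\<Sum>i<(n::nat). m i * nn i)" "\<forall>i<n. m i \<in> M \<and> nn i \<in> N"
    unfolding mod_prod_def by blast
  have "(1::'a) = (\<Sum>i<n. (m i * nn i) $$ 0)"
    using arg_cong[OF mn(1), of "\<lambda>F. F $$ 0"] by (simp add: fls_nth_sum)
  then obtain i where i: "i < n" "(m i * nn i) $$ 0 \<noteq> 0"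
    by (metis (mono_tags, lifting) lessThan_iff one_neq_zero sum.neutral)
  define u where "u = m i * nn i"
  have uR: "u \<in> RR" using mod_prod_mem[of "m i" M "nn i" N] mn(2) i(1) MN unfolding u_def by auto
  have iu: "inverse u \<in> RR" using inv_in_R[OF uR] i(2) unfolding u_def by simp
  have u0: "u \<noteq> 0" using i(2) unfolding u_def by auto
  then have x0: "m i \<noteq> 0" unfolding u_def by auto
  have mM: "m i \<in> M" and nN: "nn i \<in> N" using mn(2) i(1) by auto
  have "(*) (m i) ` \<omega> = Kc"
  proof
    show "(*) (m i) ` \<omega> \<subseteq> Kc" using mM unfolding M_def colon_eq by auto
  next
    show "Kc \<subseteq> (*) (m i) ` \<omega>"
    proof
      fix k :: "'a fls" assume k: "k \<in> Kc"
      have k': "inverse u * k \<in> Kc" using frac_K iu k unfolding frac_def by blast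
      have w: "nn i * (inverse u * k) \<in> \<omega>" using nN k' unfolding N_def colon_eq by auto
      have "m i * (nn i * (inverse u * k)) = k" using u0 unfolding u_def by (simp add: field_simps)
      then show "k \<in> (*) (m i) ` \<omega>" using w by (metis imageI)
    qed
  qed
  then show ?thesis using x0 by blast
qed

lemma blowup_scale:
  fixes \<omega> K :: "'a::field fls set"
  assumes x0: "x \<noteq> 0" and xw: "(*) x ` \<omega> = K"
  shows "blowup RR \<omega> = blowup RR K"
proof -
  have s1: "(*) x ` \<omega> \<subseteq> K" using xw by simp
  have s2: "(*) (inverse x) ` K \<subseteq> \<omega>" using xw x0 by (auto simp: field_simps)
  have p1: "(*) (x ^ n) ` mod_pow RR \<omega> n \<subseteq> mod_pow RR K n" for n
  proof (induction n)
    case 0 then show ?case by simp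
  next
    case (Suc n)
    show ?case unfolding mod_pow.simps power_Suc2 by (rule mod_prod_scale_sub[OF Suc s1])
  qed
  have p2: "(*) (inverse x ^ n) ` mod_pow RR K n \<subseteq> mod_pow RR \<omega> n" for n
  proof (induction n)
    case 0 then show ?case by simp
  next
    case (Suc n)
    show ?case unfolding mod_pow.simps power_Suc2 by (rule mod_prod_scale_sub[OF Suc s2])
  qed
  have "colon RR (mod_pow RR \<omega> n) (mod_pow RR \<omega> n) = colon RR (mod_pow RR K n) (mod_pow RR K n)" for n
  proof -
    have a: "x ^ n \<noteq> 0" using x0 by simp
    have b: "inverse (x ^ n) = inverse x ^ n" by (simp add: power_inverse)
    have c: "inverse (inverse x ^ n) = x ^ n" by (simp add: power_inverse)
    have "{z. \<forall>w\<in>mod_pow RR \<omega> n. z * w \<in> mod_pow RR \<omega> n} \<subseteq> {z. \<forall>w\<in>mod_pow RR K n. z * w \<in> mod_pow RR K n}"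
      by (rule colon_transfer_sub[OF a p1]) (simp only: b p2)
    moreover have "{z. \<forall>w\<in>mod_pow RR K n. z * w \<in> mod_pow RR K n} \<subseteq> {z. \<forall>w\<in>mod_pow RR \<omega> n. z * w \<in> mod_pow RR \<omega> n}"
      by (rule colon_transfer_sub[of "inverse x ^ n"]) (use a p1 p2 c in \<open>simp_all\<close>)
    ultimately show ?thesis unfolding colon_eq by blast
  qed
  then show ?thesis unfolding blowup_def by simp
qed

end


context nsg begin

lemma pow_one: "(1::'a::field fls) \<in> mod_pow RR Kc n"
proof (induction n)
  case 0 then show ?case using R_1 by simp
next
  case (Suc n)
  have "(1::'a fls) \<in> Kc" unfolding Kc_def supp_in_def using zero_KH by simp
  then show ?case using mod_prod_mem[OF Suc] by fastforce
qed

lemma blowup_sub_pow: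
  assumes "z \<in> blowup RR (Kc :: 'a::field fls set)"
  shows "\<exists>n. z \<in> mod_pow RR Kc n"
proof -
  obtain n where "z \<in> colon RR (mod_pow RR Kc n) (mod_pow RR Kc n)"
    using assms unfolding blowup_def by blast
  then have "z * 1 \<in> mod_pow RR Kc n" using pow_one unfolding colon_eq by blast
  then show ?thesis by auto
qed

lemma partB:
  assumes f1: "fr - 1 \<notin> H"
  shows "blowup RR (Kc :: 'a::field fls set) = VV"
proof -
  have VV_mult: "x \<in> VV \<Longrightarrow> y \<in> VV \<Longrightarrow> x * y \<in> VV" for x y :: "'a fls"
    unfolding V_eq using supp_in_mult_ge[of 0 x 0 y] by simp
  have VV_add: "x \<in> VV \<Longrightarrow> y \<in> VV \<Longrightarrow> x + y \<in> VV" for x y :: "'a fls"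
    unfolding V_eq using supp_in_add by blast
  have VV0: "(0::'a fls) \<in> VV" unfolding V_eq by (simp add: supp_in_0)
  have KV: "(Kc :: 'a fls set) \<subseteq> VV"
    unfolding Kc_def V_eq using KH_nonneg supp_in_mono[of KH "{0..}"] by auto
  have powV: "mod_pow RR Kc n \<subseteq> (VV :: 'a fls set)" for n
  proof (induction n)
    case 0 then show ?case using R_sub_V by simp
  next
    case (Suc n)
    show ?case unfolding mod_pow.simps
    proof (rule mod_prod_sub)
      fix a b :: "'a fls" assume "a \<in> mod_pow RR Kc n" "b \<in> Kc"
      then have "a \<in> VV" "b \<in> VV" using Suc KV by auto
      then show "a * b \<in> VV" by (rule VV_mult)
    qed (use VV0 VV_add in blast)+
  qed
  have oneKH: "1 \<in> KH"
  proof -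
    have "int fr - 1 = int (fr - 1)" using fr_ge1 by (simp add: of_nat_diff)
    moreover have "int (fr - 1) \<notin> HH"
    proof
      assume "int (fr - 1) \<in> HH"
      then obtain h where "h \<in> H" "int (fr - 1) = int h" by blast
      then show False using f1 by simp
    qed
    ultimately have "int fr - 1 \<notin> HH" by metis
    then show ?thesis unfolding KH_def by simp
  qed
  have t1: "(tp 1 :: 'a fls) \<in> Kc" unfolding Kc_def supp_in_def using oneKH by simp
  have tpow: "int j \<le> int n \<Longrightarrow> (tp (int j) :: 'a fls) \<in> mod_pow RR Kc n" for j n
  proof (induction n arbitrary: j)
    case 0 then show ?case using R_1 by simp
  next
    case (Suc n)
    show ?case
    proof (cases "j \<le> n")
      case True
      have "(1::'a fls) \<in> Kc" unfolding Kc_def supp_in_def using zero_KH by simp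
      moreover have "(tp (int j) :: 'a fls) \<in> mod_pow RR Kc n" using Suc.IH[of j] True by simp
      ultimately have "(tp (int j) :: 'a fls) * 1 \<in> mod_pow RR Kc (Suc n)"
        unfolding mod_pow.simps by (rule mod_prod_mem[rotated])
      then show ?thesis by simp
    next
      case False
      then have "j = Suc n" using Suc.prems by simp
      have "(tp (int n) :: 'a fls) * tp 1 \<in> mod_prod (mod_pow RR Kc n) Kc"
        using mod_prod_mem[OF Suc.IH[of n] t1] by simp
      moreover have "tp (int n) * tp 1 = (tp (int j) :: 'a fls)"
        using \<open>j = Suc n\<close> by (simp add: fls_X_intpow_times_fls_X_intpow algebra_simps)
      ultimately show ?thesis by simp
    qed
  qed
  have KP: "(Kc :: 'a fls set) \<subseteq> mod_pow RR Kc (Suc n)" for n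
  proof
    fix k :: "'a fls" assume "k \<in> Kc"
    then have "(1::'a fls) * k \<in> mod_pow RR Kc (Suc n)" unfolding mod_pow.simps by (rule mod_prod_mem[OF pow_one])
    then show "k \<in> mod_pow RR Kc (Suc n)" by simp
  qed
  define N where "N = Suc fr"
  have fP: "frac (mod_pow RR (Kc :: 'a fls set) N)" by (rule frac_pow[OF frac_K])
  have VP: "VV \<subseteq> mod_pow RR (Kc :: 'a fls set) N"
  proof
    fix F :: "'a fls" assume "F \<in> VV"
    then have F: "supp_in {0..} F" unfolding V_eq by simp
    define S where "S = (\<Sum>p\<in>{0..<int fr + 1}. fls_const (F $$ p) * tp p)"
    have sp: "F = S + (F - S)" "supp_in {int fr + 1..} (F - S)"
      using fls_eq_supp_split[OF F, of "int fr + 1"] unfolding S_def by auto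
    have "F - S \<in> Kc" unfolding Kc_def using sp(2) ge_KH supp_in_mono[of "{int fr + 1..}" KH] by auto
    then have T: "F - S \<in> mod_pow RR Kc N" using KP unfolding N_def by blast
    have "S \<in> mod_pow RR Kc N" unfolding S_def
    proof (rule frac_sum)
      show "(0::'a fls) \<in> mod_pow RR Kc N" using fP unfolding frac_def by blast
      show "x + y \<in> mod_pow RR Kc N" if "x \<in> mod_pow RR Kc N" "y \<in> mod_pow RR Kc N" for x y :: "'a fls"
        using fP that unfolding frac_def by blast
      fix p assume p: "p \<in> {0..<int fr + 1}"
      then have "p = int (nat p)" "int (nat p) \<le> int N" unfolding N_def by auto
      then have "(tp p :: 'a fls) \<in> mod_pow RR Kc N" using tpow[of "nat p" N] by simp
      then show "fls_const (F $$ p) * tp p \<in> mod_pow RR Kc N"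
        using fP R_const unfolding frac_def by blast
    qed
    then have "S + (F - S) \<in> mod_pow RR Kc N" using T fP unfolding frac_def by blast
    then show "F \<in> mod_pow RR Kc N" using sp(1) by simp
  qed
  have PV: "mod_pow RR Kc N = (VV :: 'a fls set)" using VP powV by blast
  show ?thesis
  proof
    show "blowup RR Kc \<subseteq> (VV :: 'a fls set)" using blowup_sub_pow powV by blast
    show "(VV :: 'a fls set) \<subseteq> blowup RR Kc"
    proof
      fix z :: "'a fls" assume "z \<in> VV"
      then have "z \<in> colon RR (mod_pow RR Kc N) (mod_pow RR Kc N)"
        unfolding colon_eq PV using VV_mult by blast
      then show "z \<in> blowup RR Kc" unfolding blowup_def by blast
    qed
  qed
qed

lemma partA:
  assumes f1: "fr - 1 \<in> H"
  shows "blowup_conductor RR (Kc :: 'a::field fls set) \<noteq> conductor RR VV"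
proof -
  define T :: "int set" where "T = {0} \<union> {2..}"
  have KT: "KH \<subseteq> T"
  proof
    fix z assume z: "z \<in> KH"
    have "z \<ge> 0" using KH_nonneg z by simp
    moreover have "z \<noteq> 1"
    proof
      assume "z = 1"
      have "int fr - 1 = int (fr - 1)" using fr_ge1 by simp
      moreover have "int (fr - 1) \<in> HH" using f1 by blast
      ultimately have "int fr - z \<in> HH" using \<open>z = 1\<close> by metis
      then show False using z unfolding KH_def by simp
    qed
    ultimately show "z \<in> T" unfolding T_def by auto
  qed
  have HT: "HH \<subseteq> T"
  proof
    fix z assume "z \<in> HH"
    then obtain h where "h \<in> H" "z = int h" by blast
    then have "h \<noteq> 1" using one_notin by auto
    then show "z \<in> T" using \<open>z = int h\<close> unfolding T_def by auto
  qed
  have TT: "{a + b |a b. a \<in> T \<and> b \<in> T} \<subseteq> T"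
  proof
    fix x assume "x \<in> {a + b |a b. a \<in> T \<and> b \<in> T}"
    then obtain a b where ab: "x = a + b" "a = 0 \<or> a \<ge> 2" "b = 0 \<or> b \<ge> 2" unfolding T_def by auto
    then have "x = 0 \<or> x \<ge> 2" by linarith
    then show "x \<in> T" unfolding T_def by auto
  qed
  have PT: "mod_pow RR Kc n \<subseteq> {F :: 'a fls. supp_in T F}" for n
  proof (induction n)
    case 0
    show ?case
    proof
      fix F :: "'a fls" assume "F \<in> mod_pow RR Kc 0"
      then have "supp_in HH F" unfolding R_eq by simp
      then have "supp_in T F" by (rule supp_in_mono[OF HT])
      then show "F \<in> {F. supp_in T F}" by simp
    qed
  next
    case (Suc n)
    show ?case unfolding mod_pow.simps
    proof (rule mod_prod_sub)
      fix a b :: "'a fls" assume "a \<in> mod_pow RR Kc n" "b \<in> Kc"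
      then have "supp_in T a" "supp_in KH b" using Suc unfolding Kc_def by auto
      then have "supp_in T a" "supp_in T b" using supp_in_mono[OF KT] by auto
      then have "supp_in {a + b |a b. a \<in> T \<and> b \<in> T} (a * b)" by (rule supp_in_mult)
      then show "a * b \<in> {F. supp_in T F}" using supp_in_mono[OF TT] by blast
    qed (auto intro: supp_in_0 supp_in_add)
  qed
  define e :: "'a fls" where "e = tp (int fr - 1)"
  have e_eq: "e = tp (int (fr - 1))" unfolding e_def using fr_ge1 by (simp add: of_nat_diff)
  have eR: "e \<in> RR" unfolding e_eq by (rule R_tp[OF f1])
  have eB: "e \<in> blowup RR Kc"
  proof -
    have "e \<in> colon RR (mod_pow RR Kc 0) (mod_pow RR Kc 0)"
      unfolding colon_eq mod_pow.simps using eR by (blast intro: R_mult)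
    then show ?thesis unfolding blowup_def by blast
  qed
  have eT: "{a + b |a b. a \<in> {int fr - 1} \<and> b \<in> T} \<subseteq> HH"
  proof
    fix z assume "z \<in> {a + b |a b. a \<in> {int fr - 1} \<and> b \<in> T}"
    then obtain b where b: "b \<in> T" "z = int fr - 1 + b" by blast
    show "z \<in> HH"
    proof (cases "b = 0")
      case True
      have "int (fr - 1) \<in> HH" using f1 by blast
      moreover have "z = int (fr - 1)" using True b(2) fr_ge1 by (simp add: of_nat_diff)
      ultimately show ?thesis by simp
    next
      case False
      then have "b \<ge> 2" using b(1) unfolding T_def by auto
      then have "nat z > fr" using b(2) by linarith
      then have "nat z \<in> H" by (rule gt_fr)
      moreover have "z = int (nat z)" using \<open>b \<ge> 2\<close> b(2) by linarith
      ultimately show ?thesis by (metis imageI)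
    qed
  qed
  have eBC: "e \<in> blowup_conductor RR Kc"
    unfolding blowup_conductor_def
  proof (intro CollectI conjI ballI)
    show "e \<in> blowup RR Kc" by (rule eB)
    fix y :: "'a fls" assume "y \<in> blowup RR Kc"
    then obtain n where "y \<in> mod_pow RR Kc n" using blowup_sub_pow by blast
    then have "supp_in T y" using PT by blast
    then have "supp_in {a + b |a b. a \<in> {int fr - 1} \<and> b \<in> T} (e * y)"
      unfolding e_def by (rule supp_in_mult[OF supp_in_tp])
    then show "e * y \<in> RR" unfolding R_eq using eT supp_in_mono by blast
  qed
  have "e \<notin> conductor RR VV"
  proof
    assume "e \<in> conductor RR VV"
    moreover have "(tp 1 :: 'a fls) \<in> VV" unfolding V_eq supp_in_def by simp
    ultimately have "e * tp 1 \<in> RR" unfolding conductor_def by blast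
    moreover have "e * tp 1 = tp (int fr)" unfolding e_def fls_X_intpow_times_fls_X_intpow by simp
    ultimately have "(tp (int fr) :: 'a fls) \<in> RR" by simp
    then have "int fr \<in> HH" unfolding R_eq supp_in_def by auto
    then show False using fr_notin by auto
  qed
  then show ?thesis using eBC by blast
qed

lemma qf_iff: "quasi_frobenius H (frobenius_number H - 1) \<longleftrightarrow> fr - 1 \<notin> H"
proof -
  have "fr - 1 + h \<in> H" if "h \<in> H" "h \<noteq> 0" for h
  proof -
    have "h \<noteq> 1" using that one_notin by auto
    then have "fr - 1 + h > fr" using that fr_ge1 by linarith
    then show ?thesis by (rule gt_fr)
  qed
  then show ?thesis unfolding quasi_frobenius_def fr_def[symmetric] by blast
qed

end


theorem theorem3p1:
  fixes H :: "nat set"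
  assumes "numerical_semigroup H" and "H \<noteq> UNIV"
  shows "min_canonical_conductor (semigroup_ring H :: 'a::field fls set) power_series_ring
           \<longleftrightarrow> quasi_frobenius H (frobenius_number H - 1)"
proof -
  interpret nsg H using assms by unfold_locales
  show ?thesis
  proof
    assume m: "min_canonical_conductor (semigroup_ring H :: 'a fls set) power_series_ring"
    show "quasi_frobenius H (frobenius_number H - 1)" unfolding qf_iff
    proof
      assume "fr - 1 \<in> H"
      then have "blowup_conductor RR (Kc::'a fls set) \<noteq> conductor RR VV" by (rule partA)
      moreover have "blowup_conductor RR (Kc :: 'a fls set) = conductor RR VV"
        using m K_canonical unfolding min_canonical_conductor_def by blast
      ultimately show False by simp
    qed
  next
    assume "quasi_frobenius H (frobenius_number H - 1)"
    then have f1: "fr - 1 \<notin> H" using qf_iff by simp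
    show "min_canonical_conductor (semigroup_ring H :: 'a fls set) power_series_ring"
      unfolding min_canonical_conductor_def
    proof (intro allI impI)
      fix \<omega> :: "'a fls set" assume c: "canonical_ideal RR \<omega>"
      obtain x where "x \<noteq> 0" "(*) x ` \<omega> = Kc" using canonical_unique[OF c] by blast
      then have "blowup RR \<omega> = blowup RR Kc" by (rule blowup_scale)
      also have "\<dots> = VV" by (rule partB[OF f1])
      finally have b: "blowup RR \<omega> = VV" .
      show "blowup_conductor RR \<omega> = conductor RR VV"
        unfolding blowup_conductor_def conductor_def b ..
    qed
  qed
qed


end
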